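(* Let $H=\varprojlim\langle\{H_n\}_{n\in\mathbb{N}},\{h^n_k\}_{k<n}\rangle$ be a profinite poset and let $\mathbb{P}=\varprojlim\langle\{P_n\}_{n\in\mathbb{N}},\{p^n_k\}_{k<n}\rangle$, where $\langle\{P_n\},\{p^n_k\}\rangle$ is a Fraïssé sequence in the category of finite posets with quotient maps. Then there is a continuous quotient map $f:\mathbb{P}\to H$.
   Context: A quotient map between posets is a surjective order-preserving map $\phi:A\to B$ such that for all $p\le r$ in $B$ there are $x\le y$ in $A$ with $\phi(x)=p,\phi(y)=r$. A profinite poset is an inverse limit $\varprojlim\langle\{P_n\},\{p^m_k\}\rangle=\{(x_n)\in\prod_n P_n:p^{n+1}_n(x_{n+1})=x_n\ \forall n\}$ of nonempty finite posets $P_n$ with quotient maps $p^m_k:P_m\to P_k$ ($k<m$) satisfying $p^k_l\circ p^m_k=p^m_l$, ordered coordinatewise and topologized as a subspace of the product of discrete spaces. Such a sequence is a Fraïssé sequence if (U) for every finite poset $X$ there are $n$ and a quotient map $P_n\to X$, and (A) for every $k$, every finite poset $Y$ and quotient map $f:Y\to P_k$ there exist $\ell>k$ and a quotient map $g:P_\ell\to Y$ with $f\circ g=p^\ell_k$. *)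

theory Defs
  imports "HOL-Analysis.Analysis"
begin

text \<open>A poset is given by a carrier set together with an order relation (only its
restriction to the carrier matters).\<close>
type_synonym 'a poset = "'a set \<times> ('a \<Rightarrow> 'a \<Rightarrow> bool)"

definition is_poset :: "'a poset \<Rightarrow> bool" where
  "is_poset P \<longleftrightarrow>
     (\<forall>x\<in>fst P. snd P x x) \<and>
     (\<forall>x\<in>fst P. \<forall>y\<in>fst P. snd P x y \<and> snd P y x \<longrightarrow> x = y) \<and>
     (\<forall>x\<in>fst P. \<forall>y\<in>fst P. \<forall>z\<in>fst P. snd P x y \<and> snd P y z \<longrightarrow> snd P x z)"

definition fin_poset :: "'a poset \<Rightarrow> bool" where
  "fin_poset P \<longleftrightarrow> is_poset P \<and> finite (fst P) \<and> fst P \<noteq> {}"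

definition poset_quotient_map :: "'a poset \<Rightarrow> 'b poset \<Rightarrow> ('a \<Rightarrow> 'b) \<Rightarrow> bool" where
  "poset_quotient_map A B f \<longleftrightarrow>
     f ` fst A = fst B \<and>
     (\<forall>x\<in>fst A. \<forall>y\<in>fst A. snd A x y \<longrightarrow> snd B (f x) (f y)) \<and>
     (\<forall>p\<in>fst B. \<forall>r\<in>fst B. snd B p r \<longrightarrow>
        (\<exists>x\<in>fst A. \<exists>y\<in>fst A. snd A x y \<and> f x = p \<and> f y = r))"

definition inverse_seq :: "(nat \<Rightarrow> 'a poset) \<Rightarrow> (nat \<Rightarrow> nat \<Rightarrow> 'a \<Rightarrow> 'a) \<Rightarrow> bool" where
  "inverse_seq P p \<longleftrightarrow>
     (\<forall>n. fin_poset (P n)) \<and>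
     (\<forall>k m. k < m \<longrightarrow> poset_quotient_map (P m) (P k) (p m k)) \<and>
     (\<forall>l k m. l < k \<and> k < m \<longrightarrow> (\<forall>x\<in>fst (P m). p k l (p m k x) = p m l x))"

definition invlim_set :: "(nat \<Rightarrow> 'a poset) \<Rightarrow> (nat \<Rightarrow> nat \<Rightarrow> 'a \<Rightarrow> 'a) \<Rightarrow> (nat \<Rightarrow> 'a) set" where
  "invlim_set P p = {x. (\<forall>n. x n \<in> fst (P n)) \<and> (\<forall>n. p (Suc n) n (x (Suc n)) = x n)}"

definition invlim :: "(nat \<Rightarrow> 'a poset) \<Rightarrow> (nat \<Rightarrow> nat \<Rightarrow> 'a \<Rightarrow> 'a) \<Rightarrow> (nat \<Rightarrow> 'a) poset" where
  "invlim P p = (invlim_set P p, (\<lambda>x y. \<forall>n. snd (P n) (x n) (y n)))"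

definition invlim_top :: "(nat \<Rightarrow> 'a poset) \<Rightarrow> (nat \<Rightarrow> nat \<Rightarrow> 'a \<Rightarrow> 'a) \<Rightarrow> (nat \<Rightarrow> 'a) topology" where
  "invlim_top P p =
     subtopology (product_topology (\<lambda>n. discrete_topology (fst (P n))) UNIV) (invlim_set P p)"

text \<open>Fraisse sequence. "Every finite poset" is rendered as every nonempty finite poset
  whose carrier is a set of natural numbers (every finite poset is isomorphic to one).\<close>
definition fraisse_seq :: "(nat \<Rightarrow> 'a poset) \<Rightarrow> (nat \<Rightarrow> nat \<Rightarrow> 'a \<Rightarrow> 'a) \<Rightarrow> bool" where
  "fraisse_seq P p \<longleftrightarrow>
     inverse_seq P p \<and>
     (\<forall>X :: nat poset. fin_poset X \<longrightarrow> (\<exists>n q. poset_quotient_map (P n) X q)) \<and>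
     (\<forall>k. \<forall>Y :: nat poset. \<forall>f. fin_poset Y \<and> poset_quotient_map Y (P k) f \<longrightarrow>
        (\<exists>l g. l > k \<and> poset_quotient_map (P l) Y g \<and> (\<forall>x\<in>fst (P l). f (g x) = p l k x)))"

end

theory Submission
  imports Defs
begin

lemma qm_comp:
  assumes "poset_quotient_map A B f" "poset_quotient_map B C g"
  shows "poset_quotient_map A C (g \<circ> f)"
proof -
  have i: "(g \<circ> f) ` fst A = fst C" using assms unfolding poset_quotient_map_def
    by (metis image_comp)
  have o: "\<forall>x\<in>fst A. \<forall>y\<in>fst A. snd A x y \<longrightarrow> snd C ((g\<circ>f) x) ((g\<circ>f) y)"
  proof (intro ballI impI)
    fix x y assume xy: "x \<in> fst A" "y \<in> fst A" "snd A x y"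
    have "f x \<in> fst B" "f y \<in> fst B" using xy assms(1) unfolding poset_quotient_map_def by blast+
    moreover have "snd B (f x) (f y)" using xy assms(1) unfolding poset_quotient_map_def by blast
    ultimately show "snd C ((g\<circ>f) x) ((g\<circ>f) y)" using assms(2) unfolding poset_quotient_map_def by simp
  qed
  have l: "\<forall>p\<in>fst C. \<forall>r\<in>fst C. snd C p r \<longrightarrow>
        (\<exists>x\<in>fst A. \<exists>y\<in>fst A. snd A x y \<and> (g\<circ>f) x = p \<and> (g\<circ>f) y = r)"
  proof (intro ballI impI)
    fix p r assume "p \<in> fst C" "r \<in> fst C" "snd C p r"
    then obtain u v where uv: "u \<in> fst B" "v \<in> fst B" "snd B u v" "g u = p" "g v = r"
      using assms(2) unfolding poset_quotient_map_def by blast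
    then obtain x y where "x \<in> fst A" "y \<in> fst A" "snd A x y" "f x = u" "f y = v"
      using assms(1) unfolding poset_quotient_map_def by blast
    then show "\<exists>x\<in>fst A. \<exists>y\<in>fst A. snd A x y \<and> (g\<circ>f) x = p \<and> (g\<circ>f) y = r"
      using uv by auto
  qed
  show ?thesis using i o l unfolding poset_quotient_map_def by blast
qed

lemma nat_copy:
  fixes A :: "'a set"
  assumes "fin_poset (A, R)"
  shows "\<exists>(X::nat poset) e d. fin_poset X \<and> poset_quotient_map X (A,R) e \<and>
     poset_quotient_map (A,R) X d \<and> (\<forall>a\<in>A. e (d a) = a) \<and> (\<forall>x\<in>fst X. d (e x) = x)"
proof -
  have fin: "finite A" "A \<noteq> {}" using assms unfolding fin_poset_def by auto
  obtain e where e: "bij_betw e {0..<card A} A" using ex_bij_betw_nat_finite[OF fin(1)] by blast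
  define d where "d = inv_into {0..<card A} e"
  define X where "X = ({0..<card A}, \<lambda>i j. R (e i) (e j))"
  have ed: "\<forall>a\<in>A. e (d a) = a" unfolding d_def using e
    by (meson bij_betw_inv_into_right)
  have de: "\<forall>x\<in>{0..<card A}. d (e x) = x" unfolding d_def using e
    by (metis bij_betw_inv_into_left)
  have dA: "d ` A = {0..<card A}" unfolding d_def using e
    by (metis bij_betw_def bij_betw_inv_into)
  have eA: "e ` {0..<card A} = A" using e by (simp add: bij_betw_def)
  have po: "is_poset (A,R)" using assms unfolding fin_poset_def by simp
  have eAi: "\<And>i. i \<in> {0..<card A} \<Longrightarrow> e i \<in> A" using eA by blast
  have einj: "inj_on e {0..<card A}" using e by (simp add: bij_betw_def)
  have "is_poset X" unfolding is_poset_def X_def fst_conv snd_conv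
  proof (intro conjI ballI impI)
    fix x assume "x \<in> {0..<card A}" then show "R (e x) (e x)"
      using po eAi unfolding is_poset_def by simp
  next
    fix x y assume "x \<in> {0..<card A}" "y \<in> {0..<card A}" "R (e x) (e y) \<and> R (e y) (e x)"
    then have "e x = e y" using po eAi unfolding is_poset_def by simp
    then show "x = y" using einj \<open>x \<in> _\<close> \<open>y \<in> _\<close> by (meson inj_onD)
  next
    fix x y z assume "x \<in> {0..<card A}" "y \<in> {0..<card A}" "z \<in> {0..<card A}" "R (e x) (e y) \<and> R (e y) (e z)"
    then show "R (e x) (e z)" using po eAi unfolding is_poset_def by (metis fst_conv snd_conv)
  qed
  moreover have "finite (fst X)" "fst X \<noteq> {}" using fin eA unfolding X_def by auto
  ultimately have "fin_poset X" unfolding fin_poset_def by simp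
  moreover have "poset_quotient_map X (A,R) e" unfolding poset_quotient_map_def X_def fst_conv snd_conv
  proof (intro conjI ballI impI)
    show "e ` {0..<card A} = A" by (rule eA)
  next
    fix p r assume "p \<in> A" "r \<in> A" "R p r"
    then show "\<exists>x\<in>{0..<card A}. \<exists>y\<in>{0..<card A}. R (e x) (e y) \<and> e x = p \<and> e y = r"
      using ed dA by (intro bexI[of _ "d p"] bexI[of _ "d r"]) auto
  qed auto
  moreover have "poset_quotient_map (A,R) X d" unfolding poset_quotient_map_def X_def fst_conv snd_conv
  proof (intro conjI ballI impI)
    show "d ` A = {0..<card A}" by (rule dA)
  next
    fix x y assume "x \<in> A" "y \<in> A" "R x y"
    then show "R (e (d x)) (e (d y))" using ed by simp
  next
    fix p r assume "p \<in> {0..<card A}" "r \<in> {0..<card A}" "R (e p) (e r)"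
    then show "\<exists>x\<in>A. \<exists>y\<in>A. R x y \<and> d x = p \<and> d y = r"
      using de eAi by (intro bexI[of _ "e p"] bexI[of _ "e r"]) auto
  qed
  ultimately show ?thesis using ed de unfolding X_def by (intro exI[of _ X] exI[of _ e] exI[of _ d]) (simp add: X_def)
qed

definition LIFT :: "'a poset \<Rightarrow> 'a poset \<Rightarrow> 'b poset \<Rightarrow> ('a \<Rightarrow> 'a) \<Rightarrow> ('a \<Rightarrow> 'b) \<Rightarrow> ('a \<Rightarrow> 'b) \<Rightarrow> ('b \<Rightarrow> 'b) \<Rightarrow> bool" where
  "LIFT Pn Pn' Hs q F F' hh \<longleftrightarrow>
    (\<forall>a\<in>fst Pn. \<forall>b\<in>fst Pn. \<forall>z\<in>fst Hs. \<forall>w\<in>fst Hs.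
       snd Pn a b \<and> snd Hs z w \<and> F a = hh z \<and> F b = hh w \<longrightarrow>
       (\<exists>a'\<in>fst Pn'. \<exists>b'\<in>fst Pn'. snd Pn' a' b' \<and> q a' = a \<and> q b' = b \<and> F' a' = z \<and> F' b' = w))"

lemma step:
  fixes H :: "nat \<Rightarrow> 'b poset" and h :: "nat \<Rightarrow> nat \<Rightarrow> 'b \<Rightarrow> 'b"
    and P :: "nat \<Rightarrow> 'a poset" and p :: "nat \<Rightarrow> nat \<Rightarrow> 'a \<Rightarrow> 'a"
  assumes iH: "inverse_seq H h" and fP: "fraisse_seq P p"
    and F: "poset_quotient_map (P n) (H k) F"
  shows "\<exists>n' F'. n < n' \<and> poset_quotient_map (P n') (H (Suc k)) F' \<and>
     (\<forall>x\<in>fst (P n'). h (Suc k) k (F' x) = F (p n' n x)) \<and>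
     LIFT (P n) (P n') (H (Suc k)) (p n' n) F F' (h (Suc k) k)"
proof -
  define hh where "hh = h (Suc k) k"
  define Y0 where "Y0 = {(a,b). a \<in> fst (P n) \<and> b \<in> fst (H (Suc k)) \<and> F a = hh b}"
  define R0 where "R0 = (\<lambda>u v. snd (P n) (fst u) (fst v) \<and> snd (H (Suc k)) (snd u) (snd v))"
  have hq: "poset_quotient_map (H (Suc k)) (H k) hh" using iH unfolding inverse_seq_def hh_def by simp
  have fPn: "fin_poset (P n)" using fP unfolding fraisse_seq_def inverse_seq_def by simp
  have fHs: "fin_poset (H (Suc k))" using iH unfolding inverse_seq_def by simp
  have Y0sub: "Y0 \<subseteq> fst (P n) \<times> fst (H (Suc k))" unfolding Y0_def by auto
  have "finite (fst (P n) \<times> fst (H (Suc k)))" using fPn fHs unfolding fin_poset_def by simp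
  then have "finite Y0" using Y0sub by (rule finite_subset[rotated])
  moreover have "Y0 \<noteq> {}"
  proof -
    obtain a where a: "a \<in> fst (P n)" using fPn unfolding fin_poset_def by auto
    then have "F a \<in> fst (H k)" using F unfolding poset_quotient_map_def by blast
    then obtain b where "b \<in> fst (H (Suc k))" "hh b = F a" using hq unfolding poset_quotient_map_def by (metis imageE)
    then have "(a,b) \<in> Y0" using a unfolding Y0_def by simp
    then show ?thesis by blast
  qed
  moreover have "is_poset (Y0,R0)"
  proof -
    have A: "is_poset (P n)" "is_poset (H (Suc k))" using fPn fHs unfolding fin_poset_def by auto
    show ?thesis unfolding is_poset_def fst_conv snd_conv
    proof (intro conjI ballI impI)
      fix x assume "x \<in> Y0" then have "fst x \<in> fst (P n)" "snd x \<in> fst (H (Suc k))" using Y0sub by auto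
      then show "R0 x x" using A unfolding R0_def is_poset_def by simp
    next
      fix x y assume xy: "x \<in> Y0" "y \<in> Y0" "R0 x y \<and> R0 y x"
      then have m: "fst x \<in> fst (P n)" "snd x \<in> fst (H (Suc k))" "fst y \<in> fst (P n)" "snd y \<in> fst (H (Suc k))" using Y0sub by auto
      have "fst x = fst y" using A(1) m xy(3) unfolding R0_def is_poset_def by blast
      moreover have "snd x = snd y" using A(2) m xy(3) unfolding R0_def is_poset_def by blast
      ultimately
      show "x = y" by (simp add: prod_eq_iff)
    next
      fix x y z assume xy: "x \<in> Y0" "y \<in> Y0" "z \<in> Y0" "R0 x y \<and> R0 y z"
      then have m: "fst x \<in> fst (P n)" "snd x \<in> fst (H (Suc k))" "fst y \<in> fst (P n)" "snd y \<in> fst (H (Suc k))"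
         "fst z \<in> fst (P n)" "snd z \<in> fst (H (Suc k))" using Y0sub by auto
      have "snd (P n) (fst x) (fst z)" using A(1) m xy(4) unfolding R0_def is_poset_def by blast
      moreover have "snd (H (Suc k)) (snd x) (snd z)" using A(2) m xy(4) unfolding R0_def is_poset_def by blast
      ultimately show "R0 x z" unfolding R0_def by simp
    qed
  qed
  ultimately have fY: "fin_poset (Y0,R0)" unfolding fin_poset_def by simp
  have pq1: "poset_quotient_map (Y0,R0) (P n) fst" unfolding poset_quotient_map_def fst_conv snd_conv
  proof (intro conjI ballI impI)
    show "fst ` Y0 = fst (P n)"
    proof
      show "fst ` Y0 \<subseteq> fst (P n)" using Y0sub by auto
      show "fst (P n) \<subseteq> fst ` Y0"
      proof
        fix a assume a: "a \<in> fst (P n)"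
        then have "F a \<in> fst (H k)" using F unfolding poset_quotient_map_def by blast
        then obtain b where "b \<in> fst (H (Suc k))" "hh b = F a" using hq unfolding poset_quotient_map_def by (metis imageE)
        then have "(a,b) \<in> Y0" using a unfolding Y0_def by auto
        then show "a \<in> fst ` Y0" by force
      qed
    qed
  next
    fix x y assume "x \<in> Y0" "y \<in> Y0" "R0 x y" then show "snd (P n) (fst x) (fst y)" unfolding R0_def by simp
  next
    fix a a' assume aa: "a \<in> fst (P n)" "a' \<in> fst (P n)" "snd (P n) a a'"
    then have "F a \<in> fst (H k)" "F a' \<in> fst (H k)" "snd (H k) (F a) (F a')" using F unfolding poset_quotient_map_def by blast+
    then obtain b b' where bb: "b \<in> fst (H (Suc k))" "b' \<in> fst (H (Suc k))" "snd (H (Suc k)) b b'" "hh b = F a" "hh b' = F a'"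
      using hq unfolding poset_quotient_map_def by metis
    show "\<exists>x\<in>Y0. \<exists>y\<in>Y0. R0 x y \<and> fst x = a \<and> fst y = a'"
      using aa bb by (intro bexI[of _ "(a,b)"] bexI[of _ "(a',b')"]) (auto simp: Y0_def R0_def)
  qed
  have pq2: "poset_quotient_map (Y0,R0) (H (Suc k)) snd" unfolding poset_quotient_map_def fst_conv snd_conv
  proof (intro conjI ballI impI)
    show "snd ` Y0 = fst (H (Suc k))"
    proof
      show "snd ` Y0 \<subseteq> fst (H (Suc k))" using Y0sub by auto
      show "fst (H (Suc k)) \<subseteq> snd ` Y0"
      proof
        fix b assume b: "b \<in> fst (H (Suc k))"
        then have "hh b \<in> fst (H k)" using hq unfolding poset_quotient_map_def by blast
        then obtain a where "a \<in> fst (P n)" "F a = hh b" using F unfolding poset_quotient_map_def by (metis imageE)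
        then have "(a,b) \<in> Y0" using b unfolding Y0_def by auto
        then show "b \<in> snd ` Y0" by force
      qed
    qed
  next
    fix x y assume "x \<in> Y0" "y \<in> Y0" "R0 x y" then show "snd (H (Suc k)) (snd x) (snd y)" unfolding R0_def by simp
  next
    fix b b' assume bb: "b \<in> fst (H (Suc k))" "b' \<in> fst (H (Suc k))" "snd (H (Suc k)) b b'"
    then have "hh b \<in> fst (H k)" "hh b' \<in> fst (H k)" "snd (H k) (hh b) (hh b')" using hq unfolding poset_quotient_map_def by blast+
    then obtain a a' where aa: "a \<in> fst (P n)" "a' \<in> fst (P n)" "snd (P n) a a'" "F a = hh b" "F a' = hh b'"
      using F unfolding poset_quotient_map_def by metis
    show "\<exists>x\<in>Y0. \<exists>y\<in>Y0. R0 x y \<and> snd x = b \<and> snd y = b'"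
      using aa bb by (intro bexI[of _ "(a,b)"] bexI[of _ "(a',b')"]) (auto simp: Y0_def R0_def)
  qed
  obtain X e d where X: "fin_poset (X :: nat poset)" "poset_quotient_map X (Y0,R0) e"
     "poset_quotient_map (Y0,R0) X d" "\<forall>a\<in>Y0. e (d a) = a" "\<forall>x\<in>fst X. d (e x) = x"
    using nat_copy[OF fY] by blast
  have q1: "poset_quotient_map X (P n) (fst \<circ> e)" by (rule qm_comp[OF X(2) pq1])
  obtain l g where lg: "l > n" "poset_quotient_map (P l) X g" "\<forall>x\<in>fst (P l). (fst \<circ> e) (g x) = p l n x"
    using fP q1 X(1) unfolding fraisse_seq_def by blast
  define F' where "F' = snd \<circ> (e \<circ> g)"
  have egq: "poset_quotient_map (P l) (Y0,R0) (e \<circ> g)" by (rule qm_comp[OF lg(2) X(2)])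
  have F'q: "poset_quotient_map (P l) (H (Suc k)) F'" unfolding F'_def by (rule qm_comp[OF egq pq2])
  have egY: "\<And>x. x \<in> fst (P l) \<Longrightarrow> e (g x) \<in> Y0" using egq unfolding poset_quotient_map_def by auto
  have comm: "\<forall>x\<in>fst (P l). hh (F' x) = F (p l n x)"
  proof
    fix x assume x: "x \<in> fst (P l)"
    have "p l n x = fst (e (g x))" using lg(3) x by simp
    then show "hh (F' x) = F (p l n x)" using egY[OF x] unfolding F'_def Y0_def by auto
  qed
  have lift: "LIFT (P n) (P l) (H (Suc k)) (p l n) F F' hh" unfolding LIFT_def
  proof (intro ballI impI)
    fix a b z w assume ab: "a \<in> fst (P n)" "b \<in> fst (P n)" "z \<in> fst (H (Suc k))" "w \<in> fst (H (Suc k))"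
      and c: "snd (P n) a b \<and> snd (H (Suc k)) z w \<and> F a = hh z \<and> F b = hh w"
    have Y: "(a,z) \<in> Y0" "(b,w) \<in> Y0" using ab c unfolding Y0_def by auto
    have R: "R0 (a,z) (b,w)" using c unfolding R0_def by simp
    have "d (a,z) \<in> fst X" "d (b,w) \<in> fst X" "snd X (d (a,z)) (d (b,w))"
      using X(3) Y R unfolding poset_quotient_map_def by auto
    then obtain a' b' where ab': "a' \<in> fst (P l)" "b' \<in> fst (P l)" "snd (P l) a' b'"
      "g a' = d (a,z)" "g b' = d (b,w)" using lg(2) unfolding poset_quotient_map_def by metis
    have "e (g a') = (a,z)" "e (g b') = (b,w)" using ab'(4,5) X(4) Y by auto
    moreover have "p l n a' = fst (e (g a'))" "p l n b' = fst (e (g b'))" using lg(3) ab' by auto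
    ultimately show "\<exists>a'\<in>fst (P l). \<exists>b'\<in>fst (P l). snd (P l) a' b' \<and> p l n a' = a \<and> p l n b' = b \<and> F' a' = z \<and> F' b' = w"
      using ab' unfolding F'_def by (intro bexI[of _ a'] bexI[of _ b']) auto
  qed
  show ?thesis using lg(1) F'q comm lift unfolding hh_def by blast
qed


definition pp :: "(nat \<Rightarrow> nat \<Rightarrow> 'a \<Rightarrow> 'a) \<Rightarrow> nat \<Rightarrow> nat \<Rightarrow> 'a \<Rightarrow> 'a" where
  "pp p m k y = (if m = k then y else p m k y)"

lemma pp_mem:
  assumes "inverse_seq P p" "k \<le> m" "y \<in> fst (P m)"
  shows "pp p m k y \<in> fst (P k)"
proof (cases "m = k")
  case True then show ?thesis using assms by (simp add: pp_def)
next
  case False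
  then have "poset_quotient_map (P m) (P k) (p m k)" using assms unfolding inverse_seq_def by simp
  then show ?thesis using assms False unfolding pp_def poset_quotient_map_def by auto
qed

lemma pp_mono:
  assumes "inverse_seq P p" "k \<le> m" "y \<in> fst (P m)" "y' \<in> fst (P m)" "snd (P m) y y'"
  shows "snd (P k) (pp p m k y) (pp p m k y')"
proof (cases "m = k")
  case True then show ?thesis using assms by (simp add: pp_def)
next
  case False
  then have "poset_quotient_map (P m) (P k) (p m k)" using assms unfolding inverse_seq_def by simp
  then show ?thesis using assms False unfolding pp_def poset_quotient_map_def by auto
qed

lemma pp_comp:
  assumes "inverse_seq P p" "l \<le> k" "k \<le> m" "y \<in> fst (P m)"
  shows "pp p k l (pp p m k y) = pp p m l y"
  using assms unfolding pp_def inverse_seq_def by auto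

lemma pp_thread:
  assumes "inverse_seq P p" "x \<in> invlim_set P p" "k \<le> m"
  shows "pp p m k (x m) = x k"
  using assms(3)
proof (induction m rule: dec_induct)
  case base then show ?case by (simp add: pp_def)
next
  case (step m)
  have xm: "\<And>n. x n \<in> fst (P n)" "\<And>n. p (Suc n) n (x (Suc n)) = x n" using assms(2) unfolding invlim_set_def by auto
  have "pp p (Suc m) k (x (Suc m)) = pp p m k (pp p (Suc m) m (x (Suc m)))"
    using pp_comp[OF assms(1) step(1), of "Suc m"] xm by simp
  also have "\<dots> = pp p m k (x m)" using xm by (simp add: pp_def)
  finally show ?case using step by simp
qed

lemma assemble:
  assumes iP: "inverse_seq P p" and N: "strict_mono (N :: nat \<Rightarrow> nat)"
    and a: "\<And>j. a j \<in> fst (P (N j))" "\<And>j. p (N (Suc j)) (N j) (a (Suc j)) = a j"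
  shows "(\<lambda>m. pp p (N m) m (a m)) \<in> invlim_set P p"
    "\<And>k. pp p (N (N k)) (N k) (a (N k)) = a k"
proof -
  have Nle: "\<And>m. m \<le> N m" using N strict_mono_imp_increasing by blast
  have Nmono: "\<And>i j. i \<le> j \<Longrightarrow> N i \<le> N j" using N by (simp add: strict_mono_less_eq)
  have thr: "\<And>k j. k \<le> j \<Longrightarrow> pp p (N j) (N k) (a j) = a k"
  proof -
    fix k j :: nat assume "k \<le> j"
    then show "pp p (N j) (N k) (a j) = a k"
    proof (induction j rule: dec_induct)
      case base then show ?case by (simp add: pp_def)
    next
      case (step j)
      have ne: "N (Suc j) \<noteq> N j" using N by (metis lessI order_less_irrefl strict_mono_def)
      have "pp p (N (Suc j)) (N k) (a (Suc j)) = pp p (N j) (N k) (pp p (N (Suc j)) (N j) (a (Suc j)))"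
        using pp_comp[OF iP Nmono[OF step(1)] Nmono[of j "Suc j"] a(1)] by simp
      also have "\<dots> = pp p (N j) (N k) (a j)" using ne a(2) by (simp add: pp_def)
      finally show ?case using step by simp
    qed
  qed
  show "\<And>k. pp p (N (N k)) (N k) (a (N k)) = a k" using thr Nle by blast
  show "(\<lambda>m. pp p (N m) m (a m)) \<in> invlim_set P p" unfolding invlim_set_def
  proof (intro CollectI conjI allI)
    fix m show "pp p (N m) m (a m) \<in> fst (P m)" using pp_mem[OF iP Nle a(1)] .
  next
    fix m
    have "p (Suc m) m (pp p (N (Suc m)) (Suc m) (a (Suc m))) = pp p (Suc m) m (pp p (N (Suc m)) (Suc m) (a (Suc m)))"
      by (simp add: pp_def)
    also have "\<dots> = pp p (N (Suc m)) m (a (Suc m))" using pp_comp[OF iP _ Nle a(1)] by simp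
    also have "\<dots> = pp p (N m) m (pp p (N (Suc m)) (N m) (a (Suc m)))"
      using pp_comp[OF iP Nle Nmono[of m "Suc m"] a(1)] by simp
    also have "\<dots> = pp p (N m) m (a m)" using thr[of m "Suc m"] by simp
    finally show "p (Suc m) m (pp p (N (Suc m)) (Suc m) (a (Suc m))) = pp p (N m) m (a m)" .
  qed
qed


theorem mainTheorem5:
  fixes H :: "nat \<Rightarrow> 'b poset" and h :: "nat \<Rightarrow> nat \<Rightarrow> 'b \<Rightarrow> 'b"
    and P :: "nat \<Rightarrow> 'a poset" and p :: "nat \<Rightarrow> nat \<Rightarrow> 'a \<Rightarrow> 'a"
  assumes "inverse_seq H h"
    and "fraisse_seq P p"
  shows "\<exists>f. poset_quotient_map (invlim P p) (invlim H h) f \<and>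
             continuous_map (invlim_top P p) (invlim_top H h) f"
proof -
  note iH = assms(1) and fP = assms(2)
  have iP: "inverse_seq P p" using fP unfolding fraisse_seq_def by simp
  have fH: "\<And>n. fin_poset (H n)" using iH unfolding inverse_seq_def by simp
  have fPn: "\<And>n. fin_poset (P n)" using iP unfolding inverse_seq_def by simp
  define QP where "QP = (\<lambda>k (x :: nat \<times> ('a \<Rightarrow> 'b)). poset_quotient_map (P (fst x)) (H k) (snd x))"
  define ST where "ST = (\<lambda>k (x :: nat \<times> ('a \<Rightarrow> 'b)) (y :: nat \<times> ('a \<Rightarrow> 'b)). fst x < fst y \<and>
     (\<forall>z\<in>fst (P (fst y)). h (Suc k) k (snd y z) = snd x (p (fst y) (fst x) z)) \<and>
     LIFT (P (fst x)) (P (fst y)) (H (Suc k)) (p (fst y) (fst x)) (snd x) (snd y) (h (Suc k) k))"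
  have "\<exists>G. \<forall>k. QP k (G k) \<and> ST k (G k) (G (Suc k))"
  proof (rule dependent_nat_choice)
    have "fin_poset (fst (H 0), snd (H 0))" using fH[of 0] by simp
    then obtain X :: "nat poset" and e d where X: "fin_poset X" "poset_quotient_map X (fst (H 0), snd (H 0)) e"
      using nat_copy by blast
    then obtain n q where "poset_quotient_map (P n) X q" using fP unfolding fraisse_seq_def by blast
    then have "poset_quotient_map (P n) (H 0) (e \<circ> q)" using qm_comp X(2) by fastforce
    then show "\<exists>x. QP 0 x" unfolding QP_def by (intro exI[of _ "(n, e \<circ> q)"]) simp
  next
    fix x k assume "QP k x"
    then have "poset_quotient_map (P (fst x)) (H k) (snd x)" unfolding QP_def by simp
    from step[OF iH fP this] obtain n' F' where "fst x < n'" "poset_quotient_map (P n') (H (Suc k)) F'"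
      "(\<forall>z\<in>fst (P n'). h (Suc k) k (F' z) = snd x (p n' (fst x) z))"
      "LIFT (P (fst x)) (P n') (H (Suc k)) (p n' (fst x)) (snd x) F' (h (Suc k) k)" by blast
    then show "\<exists>y. QP (Suc k) y \<and> ST k x y" unfolding QP_def ST_def
      by (intro exI[of _ "(n', F')"]) simp
  qed
  then obtain G where G: "\<And>k. QP k (G k)" "\<And>k. ST k (G k) (G (Suc k))" by blast
  define N where "N = (\<lambda>k. fst (G k))"
  define FF where "FF = (\<lambda>k. snd (G k))"
  have FFq: "\<And>k. poset_quotient_map (P (N k)) (H k) (FF k)" using G(1) unfolding QP_def N_def FF_def by simp
  have Nsuc: "\<And>k. N k < N (Suc k)" using G(2) unfolding ST_def N_def by simp
  have Nsm: "strict_mono N" using Nsuc by (simp add: strict_mono_Suc_iff)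
  have comm: "\<And>k z. z \<in> fst (P (N (Suc k))) \<Longrightarrow> h (Suc k) k (FF (Suc k) z) = FF k (p (N (Suc k)) (N k) z)"
    using G(2) unfolding ST_def N_def FF_def by simp
  have lift: "\<And>k. LIFT (P (N k)) (P (N (Suc k))) (H (Suc k)) (p (N (Suc k)) (N k)) (FF k) (FF (Suc k)) (h (Suc k) k)"
    using G(2) unfolding ST_def N_def FF_def by simp
  have FFmem: "\<And>k z. z \<in> fst (P (N k)) \<Longrightarrow> FF k z \<in> fst (H k)"
    using FFq unfolding poset_quotient_map_def by blast
  define f where "f = (\<lambda>x :: nat \<Rightarrow> 'a. \<lambda>k. FF k (x (N k)))"
  have T: "\<And>x. x \<in> invlim_set P p \<Longrightarrow> f x \<in> invlim_set H h"
  proof -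
    fix x assume x: "x \<in> invlim_set P p"
    have xm: "\<And>n. x n \<in> fst (P n)" using x unfolding invlim_set_def by auto
    show "f x \<in> invlim_set H h" unfolding invlim_set_def f_def
    proof (intro CollectI conjI allI)
      fix n show "FF n (x (N n)) \<in> fst (H n)" using FFmem xm by blast
    next
      fix n
      have "h (Suc n) n (FF (Suc n) (x (N (Suc n)))) = FF n (p (N (Suc n)) (N n) (x (N (Suc n))))"
        using comm xm by blast
      also have "p (N (Suc n)) (N n) (x (N (Suc n))) = pp p (N (Suc n)) (N n) (x (N (Suc n)))"
        using Nsuc[of n] by (simp add: pp_def)
      also have "\<dots> = x (N n)" using pp_thread[OF iP x] Nsuc[of n] by simp
      finally show "h (Suc n) n (FF (Suc n) (x (N (Suc n)))) = FF n (x (N n))" .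
    qed
  qed
  have L: "\<And>z w. z \<in> invlim_set H h \<Longrightarrow> w \<in> invlim_set H h \<Longrightarrow> (\<forall>n. snd (H n) (z n) (w n)) \<Longrightarrow>
     \<exists>x\<in>invlim_set P p. \<exists>y\<in>invlim_set P p. (\<forall>n. snd (P n) (x n) (y n)) \<and> f x = z \<and> f y = w"
  proof -
    fix z w assume z: "z \<in> invlim_set H h" and w: "w \<in> invlim_set H h" and zw: "\<forall>n. snd (H n) (z n) (w n)"
    have zm: "\<And>n. z n \<in> fst (H n)" "\<And>n. h (Suc n) n (z (Suc n)) = z n" using z unfolding invlim_set_def by auto
    have wm: "\<And>n. w n \<in> fst (H n)" "\<And>n. h (Suc n) n (w (Suc n)) = w n" using w unfolding invlim_set_def by auto
    define QA where "QA = (\<lambda>k (ab :: 'a \<times> 'a). fst ab \<in> fst (P (N k)) \<and> snd ab \<in> fst (P (N k)) \<and>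
       snd (P (N k)) (fst ab) (snd ab) \<and> FF k (fst ab) = z k \<and> FF k (snd ab) = w k)"
    define SA where "SA = (\<lambda>k (ab :: 'a \<times> 'a) (ab' :: 'a \<times> 'a). p (N (Suc k)) (N k) (fst ab') = fst ab \<and>
       p (N (Suc k)) (N k) (snd ab') = snd ab)"
    have "\<exists>AB. \<forall>k. QA k (AB k) \<and> SA k (AB k) (AB (Suc k))"
    proof (rule dependent_nat_choice)
      obtain a b where "a \<in> fst (P (N 0))" "b \<in> fst (P (N 0))" "snd (P (N 0)) a b" "FF 0 a = z 0" "FF 0 b = w 0"
        using FFq[of 0] zm(1)[of 0] wm(1)[of 0] zw unfolding poset_quotient_map_def by metis
      then show "\<exists>x. QA 0 x" unfolding QA_def by (intro exI[of _ "(a,b)"]) simp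
    next
      fix ab k assume "QA k ab"
      then have ab: "fst ab \<in> fst (P (N k))" "snd ab \<in> fst (P (N k))" "snd (P (N k)) (fst ab) (snd ab)"
        "FF k (fst ab) = h (Suc k) k (z (Suc k))" "FF k (snd ab) = h (Suc k) k (w (Suc k))"
        unfolding QA_def using zm wm by auto
      obtain a' b' where "a' \<in> fst (P (N (Suc k)))" "b' \<in> fst (P (N (Suc k)))" "snd (P (N (Suc k))) a' b'"
        "p (N (Suc k)) (N k) a' = fst ab" "p (N (Suc k)) (N k) b' = snd ab" "FF (Suc k) a' = z (Suc k)" "FF (Suc k) b' = w (Suc k)"
        using lift[of k] ab zm(1)[of "Suc k"] wm(1)[of "Suc k"] zw unfolding LIFT_def by metis
      then show "\<exists>y. QA (Suc k) y \<and> SA k ab y" unfolding QA_def SA_def by (intro exI[of _ "(a',b')"]) simp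
    qed
    then obtain AB where AB: "\<And>k. QA k (AB k)" "\<And>k. SA k (AB k) (AB (Suc k))" by blast
    define a where "a = (\<lambda>k. fst (AB k))"
    define b where "b = (\<lambda>k. snd (AB k))"
    have a1: "\<And>j. a j \<in> fst (P (N j))" "\<And>j. p (N (Suc j)) (N j) (a (Suc j)) = a j"
      using AB unfolding a_def QA_def SA_def by auto
    have b1: "\<And>j. b j \<in> fst (P (N j))" "\<And>j. p (N (Suc j)) (N j) (b (Suc j)) = b j"
      using AB unfolding b_def QA_def SA_def by auto
    have ab1: "\<And>j. snd (P (N j)) (a j) (b j)" "\<And>j. FF j (a j) = z j" "\<And>j. FF j (b j) = w j"
      using AB unfolding a_def b_def QA_def by auto
    define xx where "xx = (\<lambda>m. pp p (N m) m (a m))"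
    define yy where "yy = (\<lambda>m. pp p (N m) m (b m))"
    have Ax: "xx \<in> invlim_set P p" "\<And>k. xx (N k) = a k"
      using assemble[OF iP Nsm, of a] a1 unfolding xx_def by auto
    have Bx: "yy \<in> invlim_set P p" "\<And>k. yy (N k) = b k"
      using assemble[OF iP Nsm, of b] b1 unfolding yy_def by auto
    have Nle: "\<And>m. m \<le> N m" using Nsm strict_mono_imp_increasing by blast
    have o: "\<forall>n. snd (P n) (xx n) (yy n)"
      unfolding xx_def yy_def using pp_mono[OF iP Nle a1(1) b1(1) ab1(1)] by blast
    have "f xx = z" unfolding f_def using Ax(2) ab1(2) by simp
    moreover have "f yy = w" unfolding f_def using Bx(2) ab1(3) by simp
    ultimately show "\<exists>x\<in>invlim_set P p. \<exists>y\<in>invlim_set P p. (\<forall>n. snd (P n) (x n) (y n)) \<and> f x = z \<and> f y = w"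
      using Ax(1) Bx(1) o by blast
  qed
  have refl: "\<And>z. z \<in> invlim_set H h \<Longrightarrow> \<forall>n. snd (H n) (z n) (z n)"
    using fH unfolding invlim_set_def fin_poset_def is_poset_def by auto
  have qm: "poset_quotient_map (invlim P p) (invlim H h) f" unfolding poset_quotient_map_def invlim_def fst_conv snd_conv
  proof (intro conjI ballI impI)
    show "f ` invlim_set P p = invlim_set H h"
    proof
      show "f ` invlim_set P p \<subseteq> invlim_set H h" using T by blast
      show "invlim_set H h \<subseteq> f ` invlim_set P p"
      proof
        fix z assume "z \<in> invlim_set H h"
        then obtain x where "x \<in> invlim_set P p" "f x = z" using L[of z z] refl by blast
        then show "z \<in> f ` invlim_set P p" by blast
      qed
    qed
  next
    fix x y assume xy: "x \<in> invlim_set P p" "y \<in> invlim_set P p" "\<forall>n. snd (P n) (x n) (y n)"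
    show "\<forall>n. snd (H n) (f x n) (f y n)"
    proof
      fix n
      have "x (N n) \<in> fst (P (N n))" "y (N n) \<in> fst (P (N n))" using xy unfolding invlim_set_def by auto
      then show "snd (H n) (f x n) (f y n)" using FFq[of n] xy(3) unfolding poset_quotient_map_def f_def by blast
    qed
  next
    fix z w assume "z \<in> invlim_set H h" "w \<in> invlim_set H h" "\<forall>n. snd (H n) (z n) (w n)"
    then show "\<exists>x\<in>invlim_set P p. \<exists>y\<in>invlim_set P p. (\<forall>n. snd (P n) (x n) (y n)) \<and> f x = z \<and> f y = w"
      using L by blast
  qed
  have cm: "continuous_map (invlim_top P p) (invlim_top H h) f"
    unfolding invlim_top_def continuous_map_in_subtopology
  proof
    show "continuous_map (subtopology (product_topology (\<lambda>n. discrete_topology (fst (P n))) UNIV) (invlim_set P p))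
        (product_topology (\<lambda>n. discrete_topology (fst (H n))) UNIV) f"
      unfolding continuous_map_componentwise_UNIV
    proof
      fix k
      have c1: "continuous_map (subtopology (product_topology (\<lambda>n. discrete_topology (fst (P n))) UNIV) (invlim_set P p))
         (discrete_topology (fst (P (N k)))) (\<lambda>x. x (N k))"
        by (rule continuous_map_from_subtopology) (rule continuous_map_product_projection, simp)
      have c2: "continuous_map (discrete_topology (fst (P (N k)))) (discrete_topology (fst (H k))) (FF k)"
        using FFmem by auto
      have "(\<lambda>x. f x k) = FF k \<circ> (\<lambda>x. x (N k))" unfolding f_def by auto
      then show "continuous_map (subtopology (product_topology (\<lambda>n. discrete_topology (fst (P n))) UNIV) (invlim_set P p))
         (discrete_topology (fst (H k))) (\<lambda>x. f x k)"
        using continuous_map_compose[OF c1 c2] by simp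
    qed
  next
    show "f \<in> topspace (subtopology (product_topology (\<lambda>n. discrete_topology (fst (P n))) UNIV) (invlim_set P p)) \<rightarrow> invlim_set H h"
      using T by auto
  qed
  show ?thesis using qm cm by blast
qed

end
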